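(* Let $G=(V,E)$ be a finite simple strongly connected directed graph. Then the polynomial $\det(L)$ divides $\det(\mathcal L)$.
   Context: $x_e$ ($e\in E$), $y_v$ ($v\in V$) are indeterminates; $Q_{vw}=x_e$ for an edge $e$ from $v\neq w$ to $w$ (else $0$), $Q_{vv}=-\sum_{s(e)=v}x_e$; $L=Q+\mathrm{diag}(y_v)$. A spanning tree of $G$ is a subgraph on all vertices with no cycle, one vertex (root) of outdegree $0$ and all others of outdegree $1$. The tree graph $\mathcal TG$: vertices are spanning trees; for a tree $\mathbf a$ rooted at $r$ and $e$ with $s(e)=r$, adding $e$ and deleting the edge of $\mathbf a$ going out of $t(e)$ gives a tree $\mathbf b$ and an edge $\mathbf a\to\mathbf b$ of weight $x_e$. $\mathcal L$ is the matrix indexed by spanning trees with $\mathcal L_{\mathbf a\mathbf b}=x_e$ for such edges, $0$ for other off-diagonal entries, and $\mathcal L_{\mathbf a\mathbf a}=-\sum_{s(e)=r}x_e+y_r$, $r$ the root of $\mathbf a$. *)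

theory Defs
  imports "HOL-Library.Poly_Mapping" "HOL-Combinatorics.Permutations"
begin

text \<open>Multivariate polynomials with integer coefficients in the indeterminates
  x_e (e an edge, encoded as Inl e) and y_v (v a vertex, encoded as Inr v):
  finitely supported maps from monomials (finitely supported exponent vectors)
  to coefficients.\<close>

type_synonym 'v gpoly = "((('v \<times> 'v) + 'v) \<Rightarrow>\<^sub>0 nat) \<Rightarrow>\<^sub>0 int"

definition Xv :: "('v \<times> 'v) \<Rightarrow> 'v gpoly" where
  "Xv e = Poly_Mapping.single (Poly_Mapping.single (Inl e) 1) 1"

definition Yv :: "'v \<Rightarrow> 'v gpoly" where
  "Yv v = Poly_Mapping.single (Poly_Mapping.single (Inr v) 1) 1"

definition det_on :: "'i set \<Rightarrow> ('i \<Rightarrow> 'i \<Rightarrow> 'a::comm_ring_1) \<Rightarrow> 'a" where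
  "det_on S A = (\<Sum>p\<in>{p. p permutes S}. of_int (sign p) * (\<Prod>i\<in>S. A i (p i)))"

definition simple_digraph :: "'v set \<Rightarrow> ('v \<times> 'v) set \<Rightarrow> bool" where
  "simple_digraph V E \<longleftrightarrow> finite V \<and> E \<subseteq> V \<times> V \<and> (\<forall>v. (v, v) \<notin> E)"

definition strongly_connected :: "'v set \<Rightarrow> ('v \<times> 'v) set \<Rightarrow> bool" where
  "strongly_connected V E \<longleftrightarrow> (\<forall>v\<in>V. \<forall>w\<in>V. (v, w) \<in> E\<^sup>*)"

definition Lmat :: "'v set \<Rightarrow> ('v \<times> 'v) set \<Rightarrow> 'v \<Rightarrow> 'v \<Rightarrow> 'v gpoly" where
  "Lmat V E v w =
     (if v = w then - (\<Sum>e\<in>{e\<in>E. fst e = v}. Xv e) + Yv v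
      else if (v, w) \<in> E then Xv (v, w) else 0)"

definition is_spanning_tree :: "'v set \<Rightarrow> ('v \<times> 'v) set \<Rightarrow> ('v \<times> 'v) set \<Rightarrow> bool" where
  "is_spanning_tree V E T \<longleftrightarrow> T \<subseteq> E \<and> acyclic T \<and>
     (\<exists>r\<in>V. {e\<in>T. fst e = r} = {} \<and> (\<forall>v\<in>V. v \<noteq> r \<longrightarrow> card {e\<in>T. fst e = v} = 1))"

definition spanning_trees :: "'v set \<Rightarrow> ('v \<times> 'v) set \<Rightarrow> ('v \<times> 'v) set set" where
  "spanning_trees V E = {T. is_spanning_tree V E T}"

definition tree_root :: "'v set \<Rightarrow> ('v \<times> 'v) set \<Rightarrow> 'v" where
  "tree_root V T = (THE r. r \<in> V \<and> {e\<in>T. fst e = r} = {})"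

text \<open>Tree graph move: add e (with s(e) = root of a) and delete the edge of a
  going out of t(e).\<close>

definition tree_move :: "'v set \<Rightarrow> ('v \<times> 'v) set \<Rightarrow> ('v \<times> 'v) \<Rightarrow> ('v \<times> 'v) set" where
  "tree_move V a e = insert e (a - {d\<in>a. fst d = snd e})"

text \<open>Off the diagonal, the entry is x_e
  if b arises from a by the move along e, else 0 (the edge e is unique, being
  the edge from root a to root b; we write the entry as the sum over such e).\<close>

definition TLmat :: "'v set \<Rightarrow> ('v \<times> 'v) set \<Rightarrow> ('v \<times> 'v) set \<Rightarrow> ('v \<times> 'v) set \<Rightarrow> 'v gpoly" where
  "TLmat V E a b =
     (if a = b then - (\<Sum>e\<in>{e\<in>E. fst e = tree_root V a}. Xv e) + Yv (tree_root V a)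
      else (\<Sum>e\<in>{e\<in>E. fst e = tree_root V a \<and> b = tree_move V a e}. Xv e))"

end

theory Submission
  imports Defs "Jordan_Normal_Form.Determinant"
begin

lemma det_on_cong:
  assumes "\<And>i j. i \<in> S \<Longrightarrow> j \<in> S \<Longrightarrow> A i j = B i j"
  shows "det_on S A = det_on S B"
  unfolding det_on_def
  by (intro sum.cong refl arg_cong2[where f="(*)"] prod.cong) (auto simp: assms permutes_in_image)

lemma det_on_reindex:
  assumes g: "bij_betw g T S" and fin: "finite T"
  shows "det_on S M = det_on T (\<lambda>i j. M (g i) (g j))"
proof -
  define h where "h = inv_into T g"
  have hg: "\<And>x. x \<in> T \<Longrightarrow> h (g x) = x" using g unfolding h_def by (simp add: bij_betw_inv_into_left)
  have gh: "\<And>x. x \<in> S \<Longrightarrow> g (h x) = x" using g unfolding h_def by (simp add: bij_betw_inv_into_right)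
  have hS: "\<And>x. x \<in> S \<Longrightarrow> h x \<in> T" using g unfolding h_def by (meson bij_betw_apply bij_betw_inv_into)
  have gT: "\<And>x. x \<in> T \<Longrightarrow> g x \<in> S" using g by (meson bij_betw_apply)
  define F where "F p = (\<lambda>x. if x \<in> S then g (p (h x)) else x)" for p
  define G where "G q = (\<lambda>x. if x \<in> T then h (q (g x)) else x)" for q
  have bijh: "bij_betw h S T" using g unfolding h_def by (rule bij_betw_inv_into)
  have FP: "F p permutes S" and Fs: "sign (F p) = sign p" if p: "p permutes T" for p
  proof -
    interpret permutes_bij_finite p T S g h "F p"
      by unfold_locales (use p g hg fin in \<open>auto simp: F_def\<close>)
    show "F p permutes S" using permutes_p' .
    show "sign (F p) = sign p" using sign_p' .
  qed
  have GP: "G q permutes T" if q: "q permutes S" for q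
  proof -
    interpret permutes_bij_finite q S T h g "G q"
      by unfold_locales (use q bijh gh g fin bij_betw_finite in \<open>auto simp: G_def\<close>)
    show "G q permutes T" using permutes_p' .
  qed
  show ?thesis unfolding det_on_def
  proof (rule sym, rule sum.reindex_bij_witness[of _ G F])
    fix q assume q: "q \<in> {p. p permutes S}"
    then have qp: "q permutes S" by simp
    show "F (G q) = q"
    proof
      fix x show "F (G q) x = q x"
        using qp by (cases "x \<in> S") (auto simp: F_def G_def hS gh hg permutes_in_image permutes_not_in)
    qed
    show "G q \<in> {p. p permutes T}" using GP qp by simp
  next
    fix p assume p: "p \<in> {p. p permutes T}"
    then have pp: "p permutes T" by simp
    show "G (F p) = p"
    proof
      fix x show "G (F p) x = p x"
        using pp by (cases "x \<in> T") (auto simp: F_def G_def gT gh hg permutes_in_image permutes_not_in)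
    qed
    show "F p \<in> {p. p permutes S}" using FP pp by simp
    have "(\<Prod>i\<in>S. M i (F p i)) = (\<Prod>j\<in>T. M (g j) (F p (g j)))"
      using g by (metis (no_types, lifting) bij_betw_def prod.reindex_cong)
    also have "\<dots> = (\<Prod>j\<in>T. M (g j) (g (p j)))"
      by (intro prod.cong refl) (simp add: F_def gT hg)
    finally show "of_int (sign (F p)) * (\<Prod>i\<in>S. M i (F p i)) = of_int (sign p) * (\<Prod>i\<in>T. M (g i) (g (p i)))"
      using Fs[OF pp] by simp
  qed
qed

lemma det_on_nat: "det_on {0..<n} M = det (mat n n (\<lambda>(i,j). M i j))"
proof -
  have "det (mat n n (\<lambda>(i,j). M i j)) = (\<Sum>p \<in> {p. p permutes {0 ..< n}}.
     signof p * (\<Prod> i = 0 ..< n. mat n n (\<lambda>(i,j). M i j) $$ (i, p i)))"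
    by (rule det_def') simp
  also have "\<dots> = det_on {0..<n} M" unfolding det_on_def
    by (intro sum.cong refl arg_cong2[where f="(*)"] prod.cong) (auto simp: permutes_in_image)
  finally show ?thesis by simp
qed

lemma det_on_mult:
  assumes fin: "finite S"
  shows "det_on S (\<lambda>i j. \<Sum>k\<in>S. A i k * B k j) = det_on S A * det_on S B"
proof -
  obtain g where g: "bij_betw g {0..<card S} S" using ex_bij_betw_nat_finite[OF fin] by blast
  define n where "n = card S"
  define MA where "MA = mat n n (\<lambda>(i,j). A (g i) (g j))"
  define MB where "MB = mat n n (\<lambda>(i,j). B (g i) (g j))"
  have "MA * MB = mat n n (\<lambda>(i,j). \<Sum>k\<in>S. A (g i) k * B k (g j))"
  proof (rule eq_matI)
    fix i j assume i: "i < dim_row (mat n n (\<lambda>(i,j). \<Sum>k\<in>S. A (g i) k * B k (g j)))"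
      and j: "j < dim_col (mat n n (\<lambda>(i,j). \<Sum>k\<in>S. A (g i) k * B k (g j)))"
    have "(MA * MB) $$ (i,j) = (\<Sum>k\<in>{0..<n}. A (g i) (g k) * B (g k) (g j))"
      using i j by (simp add: MA_def MB_def scalar_prod_def)
    also have "\<dots> = (\<Sum>k\<in>S. A (g i) k * B k (g j))"
      using g unfolding n_def by (metis (no_types, lifting) bij_betw_def sum.reindex_cong)
    finally show "(MA * MB) $$ (i,j) = mat n n (\<lambda>(i,j). \<Sum>k\<in>S. A (g i) k * B k (g j)) $$ (i,j)"
      using i j by simp
  qed (auto simp: MA_def MB_def)
  then have "det (mat n n (\<lambda>(i,j). \<Sum>k\<in>S. A (g i) k * B k (g j))) = det MA * det MB"
    by (metis MA_def MB_def det_mult mat_carrier)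
  moreover have e: "det_on S M = det (mat n n (\<lambda>(i,j). M (g i) (g j)))" for M
    using det_on_reindex[OF g, of M] det_on_nat[of n "\<lambda>i j. M (g i) (g j)"] n_def by simp
  ultimately show ?thesis
    unfolding e[of "\<lambda>i j. \<Sum>k\<in>S. A i k * B k j"] e[of A] e[of B] MA_def MB_def by simp
qed

lemma det_on_block:
  assumes finA: "finite A" and finB: "finite B" and disj: "A \<inter> B = {}"
    and z: "\<And>i j. i \<in> B \<Longrightarrow> j \<in> A \<Longrightarrow> M i j = 0"
  shows "det_on (A \<union> B) M = det_on A M * det_on B M"
proof -
  let ?t = "\<lambda>S r. of_int (sign r) * (\<Prod>i\<in>S. M i (r i))"
  define P where "P = {r. r permutes A \<union> B}"
  define P0 where "P0 = {r. r permutes A \<union> B \<and> r ` A = A}"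
  have finP: "finite P" unfolding P_def using finA finB by (simp add: finite_permutations)
  have imgB: "r ` B = B" if r: "r permutes A \<union> B" "r ` A = A" for r
  proof -
    have "r ` (A \<union> B) = A \<union> B" using r permutes_image by blast
    moreover have "inj r" using r permutes_inj by blast
    moreover have "r ` A \<inter> r ` B = {}" using \<open>inj r\<close> disj by (simp add: image_Int[symmetric])
    note facts = calculation
    show ?thesis
    proof
      show "r ` B \<subseteq> B"
      proof
        fix y assume "y \<in> r ` B"
        then obtain x where x: "x \<in> B" "y = r x" by blast
        have "r x \<in> A \<union> B" using x(1) r(1) permutes_in_image by fastforce
        moreover have "r x \<notin> A"
        proof
          assume "r x \<in> A"
          then have "r x \<in> r ` A" using r(2) by simp
          then obtain z where z: "z \<in> A" "r x = r z" by blast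
          then have "x = z" using facts(2) by (meson injD)
          then show False using z x disj by blast
        qed
        ultimately show "y \<in> B" using x by blast
      qed
      show "B \<subseteq> r ` B"
      proof
        fix y assume y: "y \<in> B"
        then have "y \<in> r ` (A \<union> B)" using facts by blast
        then obtain x where x: "x \<in> A \<union> B" "y = r x" by blast
        have "x \<notin> A" using x y r(2) disj by blast
        then show "y \<in> r ` B" using x by blast
      qed
    qed
  qed
  have step1: "sum (?t (A \<union> B)) P = sum (?t (A \<union> B)) P0"
  proof (rule sum.mono_neutral_right[OF finP])
    show "P0 \<subseteq> P" unfolding P_def P0_def by auto
    show "\<forall>r\<in>P - P0. ?t (A \<union> B) r = 0"
    proof
      fix r assume r: "r \<in> P - P0"
      then have rp: "r permutes A \<union> B" and nA: "r ` A \<noteq> A" unfolding P_def P0_def by auto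
      have "\<exists>i\<in>B. r i \<in> A"
      proof (rule ccontr)
        assume "\<not> ?thesis"
        then have sub: "r ` B \<subseteq> B" using rp permutes_in_image by fastforce
        have "inj_on r B" using rp permutes_inj inj_on_subset by blast
        then have rB: "r ` B = B" using sub finB by (simp add: endo_inj_surj)
        have f1: "r ` (A \<union> B) = A \<union> B" using rp permutes_image by blast
        have f2: "inj r" using rp permutes_inj by blast
        note facts = f1 f2
        have "r ` A = A"
        proof
          show "r ` A \<subseteq> A"
          proof
            fix y assume "y \<in> r ` A"
            then obtain x where x: "x \<in> A" "y = r x" by blast
            have "r x \<in> A \<union> B" using x(1) rp permutes_in_image by fastforce
            moreover have "r x \<notin> B"
            proof
              assume "r x \<in> B"
              then have "r x \<in> r ` B" using rB by simp
              then obtain z where z: "z \<in> B" "r x = r z" by blast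
              then have "x = z" using facts(2) by (meson injD)
              then show False using z x disj by blast
            qed
            ultimately show "y \<in> A" using x by blast
          qed
          show "A \<subseteq> r ` A"
          proof
            fix y assume y: "y \<in> A"
            then have "y \<in> r ` (A \<union> B)" using facts by blast
            then obtain x where x: "x \<in> A \<union> B" "y = r x" by blast
            have "x \<notin> B" using x y rB disj by blast
            then show "y \<in> r ` A" using x by blast
          qed
        qed
        with nA show False by simp
      qed
      then obtain i where i: "i \<in> B" "r i \<in> A" by blast
      have "(\<Prod>i\<in>A \<union> B. M i (r i)) = 0"
        using i z finA finB by (intro prod_zero) auto
      then show "?t (A \<union> B) r = 0" by simp
    qed
  qed
  define rA where "rA r = (\<lambda>x. if x \<in> A then r x else x)" for r :: "'a \<Rightarrow> 'a"
  define rB where "rB r = (\<lambda>x. if x \<in> B then r x else x)" for r :: "'a \<Rightarrow> 'a"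
  have rr: "rA r \<circ> rB r = r" if "r \<in> P0" for r
  proof -
    from that have rp: "r permutes A \<union> B" and rA': "r ` A = A" unfolding P0_def by auto
    have rB': "r ` B = B" using imgB rp rA' by blast
    show ?thesis
    proof
      fix x show "(rA r \<circ> rB r) x = r x"
      proof (cases "x \<in> B")
        case True
        then have "r x \<in> B" using rB' by blast
        then have "r x \<notin> A" using disj by blast
        then show ?thesis using True by (simp add: rA_def rB_def)
      next
        case False
        then show ?thesis using rp by (auto simp: rA_def rB_def permutes_not_in)
      qed
    qed
  qed
  have rr': "rA r (rB r i) = r i" if "r \<in> P0" for r i using fun_cong[OF rr[OF that], of i] by simp
  have step2: "sum (?t (A \<union> B)) P0 = (\<Sum>pq\<in>{p. p permutes A} \<times> {q. q permutes B}. ?t (A \<union> B) (fst pq \<circ> snd pq))"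
  proof (rule sum.reindex_bij_witness[of _ "\<lambda>pq. fst pq \<circ> snd pq" "\<lambda>r. (rA r, rB r)"])
    fix r assume "r \<in> P0"
    then have rp: "r permutes A \<union> B" and rA': "r ` A = A" unfolding P0_def by auto
    have rB': "r ` B = B" using imgB rp rA' by blast
    have inj: "inj r" using rp permutes_inj by blast
    show "fst (rA r, rB r) \<circ> snd (rA r, rB r) = r" using rr[OF \<open>r \<in> P0\<close>] by simp
    have "bij_betw r A A" using inj rA' by (metis bij_betw_def inj_on_subset subset_UNIV)
    then have "bij_betw (rA r) A A" by (rule bij_betw_cong[THEN iffD1, rotated]) (simp add: rA_def)
    then have pA: "rA r permutes A" by (rule bij_imp_permutes) (simp add: rA_def)
    have "bij_betw r B B" using inj rB' by (metis bij_betw_def inj_on_subset subset_UNIV)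
    then have "bij_betw (rB r) B B" by (rule bij_betw_cong[THEN iffD1, rotated]) (simp add: rB_def)
    then have pB: "rB r permutes B" by (rule bij_imp_permutes) (simp add: rB_def)
    show "(rA r, rB r) \<in> {p. p permutes A} \<times> {q. q permutes B}" using pA pB by simp
  next
    fix pq assume "pq \<in> {p. p permutes A} \<times> {q. q permutes B}"
    then obtain p q where pq: "pq = (p, q)" and p: "p permutes A" and q: "q permutes B" by auto
    have qA: "q x = x" if "x \<in> A" for x
    proof -
      have "x \<notin> B" using that disj by blast
      then show ?thesis using q by (simp add: permutes_not_in)
    qed
    have qB: "q x \<in> B" if "x \<in> B" for x using q that by (simp add: permutes_in_image)
    have pB: "p x = x" if "x \<in> B" for x
    proof -
      have "x \<notin> A" using that disj by blast
      then show ?thesis using p by (simp add: permutes_not_in)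
    qed
    show "(rA (fst pq \<circ> snd pq), rB (fst pq \<circ> snd pq)) = pq"
    proof -
      have "rA (p \<circ> q) = p"
      proof
        fix x show "rA (p \<circ> q) x = p x" using qA p by (cases "x \<in> A") (simp_all add: rA_def permutes_not_in)
      qed
      moreover have "rB (p \<circ> q) = q"
      proof
        fix x show "rB (p \<circ> q) x = q x"
        proof (cases "x \<in> B")
          case True
          then have "q x \<notin> A" using qB disj by blast
          then show ?thesis using True p by (simp add: rB_def permutes_not_in)
        next
          case False then show ?thesis using q by (simp add: rB_def permutes_not_in)
        qed
      qed
      ultimately show ?thesis using pq by simp
    qed
    have "p \<circ> q permutes A \<union> B"
      using permutes_subset[OF p, of "A \<union> B"] permutes_subset[OF q, of "A \<union> B"]
      by (intro permutes_compose) auto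
    moreover have "(p \<circ> q) ` A = A"
    proof -
      have "(p \<circ> q) ` A = p ` (q ` A)" by (simp add: image_comp)
      also have "q ` A = A" using qA by simp
      also have "p ` A = A" using p permutes_image by blast
      finally show ?thesis .
    qed
    ultimately show "fst pq \<circ> snd pq \<in> P0" using pq unfolding P0_def by simp
  qed (simp add: rr rr')
  have step3: "of_int (sign (p \<circ> q)) * (\<Prod>i\<in>A \<union> B. M i (p (q i))) = of_int (sign p) * (\<Prod>i\<in>A. M i (p i)) * (of_int (sign q) * (\<Prod>i\<in>B. M i (q i)))" if p: "p permutes A" and q: "q permutes B" for p q
  proof -
    have qA: "q x = x" if "x \<in> A" for x
    proof -
      have "x \<notin> B" using that disj by blast
      then show ?thesis using q by (simp add: permutes_not_in)
    qed
    have qB: "q x \<in> B" if "x \<in> B" for x using q that by (simp add: permutes_in_image)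
    have pB: "p x = x" if "x \<in> B" for x
    proof -
      have "x \<notin> A" using that disj by blast
      then show ?thesis using p by (simp add: permutes_not_in)
    qed
    have "sign (p \<circ> q) = sign p * sign q"
      using p q finA finB by (simp add: sign_compose permutes_imp_permutation)
    moreover have "(\<Prod>i\<in>A \<union> B. M i ((p \<circ> q) i)) = (\<Prod>i\<in>A. M i ((p \<circ> q) i)) * (\<Prod>i\<in>B. M i ((p \<circ> q) i))"
      using finA finB disj by (simp add: prod.union_disjoint)
    moreover have "(\<Prod>i\<in>A. M i ((p \<circ> q) i)) = (\<Prod>i\<in>A. M i (p i))"
      using qA by simp
    moreover have "(\<Prod>i\<in>B. M i ((p \<circ> q) i)) = (\<Prod>i\<in>B. M i (q i))"
      using qB pB by simp
    ultimately show ?thesis by (simp add: algebra_simps)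
  qed
  have "det_on (A \<union> B) M = (\<Sum>pq\<in>{p. p permutes A} \<times> {q. q permutes B}. ?t A (fst pq) * ?t B (snd pq))"
    unfolding det_on_def P_def[symmetric] step1 step2
    by (intro sum.cong refl) (auto simp: step3)
  also have "\<dots> = det_on A M * det_on B M"
    unfolding det_on_def sum_product sum.cartesian_product by (simp add: case_prod_beta)
  finally show ?thesis .
qed

lemma det_on_id: fixes S :: "'i set" assumes finS: "finite S" shows "det_on S (\<lambda>i j. if i = j then 1 else 0) = (1::'r::comm_ring_1)"
proof -
  have "det_on S (\<lambda>i j. if i = j then 1 else 0) = (\<Sum>p\<in>{p. p permutes S}. if p = id then 1 else (0::'r))"
    unfolding det_on_def
  proof (intro sum.cong refl)
    fix p assume "p \<in> {p. p permutes S}"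
    then have p: "p permutes S" by simp
    show "of_int (sign p) * (\<Prod>i\<in>S. if i = p i then 1 else 0) = (if p = id then 1 else (0::'r))"
    proof (cases "p = id")
      case True then show ?thesis by simp
    next
      case False
      have "\<exists>x. p x \<noteq> x" using False by (auto simp: fun_eq_iff)
      then obtain x where "p x \<noteq> x" by blast
      then have "x \<in> S" using p permutes_not_in by metis
      then have "(\<Prod>i\<in>S. (if i = p i then 1 else 0)) = (0::'r)"
        using \<open>p x \<noteq> x\<close> \<open>x \<in> S\<close> finS by (intro prod_zero) (auto intro!: bexI[of _ x])
      then have "of_int (sign p) * (\<Prod>i\<in>S. (if i = p i then 1 else 0)) = (0::'r)"
        by (simp only: mult_zero_right)
      then show ?thesis using False by (simp only: if_False)
    qed
  qed
  also have "\<dots> = 1" using permutes_id[of S] finite_permutations[OF finS] by (simp add: sum.delta)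
  finally show ?thesis .
qed


lemma root_unique:
  assumes T: "is_spanning_tree V E T" and r: "r \<in> V" "{e\<in>T. fst e = r} = {}"
  shows "tree_root V T = r"
proof -
  obtain r0 where r0: "r0 \<in> V" "{e\<in>T. fst e = r0} = {}"
    and one: "\<And>v. v \<in> V \<Longrightarrow> v \<noteq> r0 \<Longrightarrow> card {e\<in>T. fst e = v} = 1"
    using T unfolding is_spanning_tree_def by blast
  have u: "x = r0" if "x \<in> V" "{e\<in>T. fst e = x} = {}" for x
    using one[of x] that by (metis card.empty zero_neq_one)
  show ?thesis unfolding tree_root_def
  proof (rule the_equality)
    show "r \<in> V \<and> {e\<in>T. fst e = r} = {}" using r by blast
    fix x assume "x \<in> V \<and> {e\<in>T. fst e = x} = {}"
    then show "x = r" using u[of x] u[OF r] by auto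
  qed
qed

lemma root_props:
  assumes T: "is_spanning_tree V E T"
  shows "tree_root V T \<in> V" "{e\<in>T. fst e = tree_root V T} = {}"
    "\<And>v. v \<in> V \<Longrightarrow> v \<noteq> tree_root V T \<Longrightarrow> card {e\<in>T. fst e = v} = 1"
proof -
  obtain r0 where r0: "r0 \<in> V" "{e\<in>T. fst e = r0} = {}"
    and one: "\<And>v. v \<in> V \<Longrightarrow> v \<noteq> r0 \<Longrightarrow> card {e\<in>T. fst e = v} = 1"
    using T unfolding is_spanning_tree_def by blast
  have "tree_root V T = r0" using root_unique[OF T r0] .
  then show "tree_root V T \<in> V" "{e\<in>T. fst e = tree_root V T} = {}"
    "\<And>v. v \<in> V \<Longrightarrow> v \<noteq> tree_root V T \<Longrightarrow> card {e\<in>T. fst e = v} = 1"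
    using r0 one by auto
qed

lemma move_tree:
  assumes G: "simple_digraph V E" and T: "is_spanning_tree V E T"
    and e: "e \<in> E" "fst e = tree_root V T"
  shows "is_spanning_tree V E (tree_move V T e)" "tree_root V (tree_move V T e) = snd e"
    "tree_move V T e \<noteq> T"
proof -
  define r where "r = tree_root V T"
  obtain w where ew: "e = (r, w)" using e r_def by (cases e) auto
  have wV: "w \<in> V" and rw: "r \<noteq> w" using G e ew unfolding simple_digraph_def by auto
  define R where "R = T - {d\<in>T. fst d = w}"
  have b: "tree_move V T e = insert (r, w) R" unfolding tree_move_def R_def ew by simp
  have rV: "r \<in> V" and rT: "{d\<in>T. fst d = r} = {}" using root_props[OF T] r_def by auto
  have TE: "T \<subseteq> E" and acT: "acyclic T" using T unfolding is_spanning_tree_def by auto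
  have out: "{d\<in>insert (r, w) R. fst d = u} = (if u = r then {(r,w)} else if u = w then {} else {d\<in>T. fst d = u})" for u
    using rT rw unfolding R_def by auto
  have "acyclic R" using acT unfolding R_def by (rule acyclic_subset) auto
  have Rw: "(w, x) \<in> R\<^sup>* \<Longrightarrow> x = w" for x
    by (erule converse_rtranclE) (auto simp: R_def)
  have ac: "acyclic (insert (r, w) R)"
    unfolding acyclic_def
  proof
    fix x
    show "(x, x) \<notin> (insert (r, w) R)\<^sup>+"
    proof
      assume "(x, x) \<in> (insert (r, w) R)\<^sup>+"
      then have "(x, x) \<in> R\<^sup>+ \<or> ((x, r) \<in> R\<^sup>* \<and> (w, x) \<in> R\<^sup>*)"
        by (simp add: trancl_insert)
      then show False
      proof
        assume "(x, x) \<in> R\<^sup>+" then show False using \<open>acyclic R\<close> unfolding acyclic_def by blast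
      next
        assume h: "(x, r) \<in> R\<^sup>* \<and> (w, x) \<in> R\<^sup>*"
        then have "x = w" using Rw by blast
        then have "r = w" using h Rw by blast
        then show False using rw by simp
      qed
    qed
  qed
  have sub: "insert (r, w) R \<subseteq> E" using TE e ew unfolding R_def by auto
  have st: "is_spanning_tree V E (insert (r, w) R)"
    unfolding is_spanning_tree_def
  proof (intro conjI sub ac bexI[of _ w] ballI impI)
    show "{d\<in>insert (r, w) R. fst d = w} = {}" using out[of w] rw by simp
    fix v assume v: "v \<in> V" "v \<noteq> w"
    show "card {d\<in>insert (r, w) R. fst d = v} = 1"
    proof (cases "v = r")
      case True then show ?thesis using out[of v] by simp
    next
      case False then show ?thesis using out[of v] v root_props(3)[OF T, of v] r_def by simp
    qed
  qed (rule wV)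
  then show "is_spanning_tree V E (tree_move V T e)" using b by simp
  show "tree_root V (tree_move V T e) = snd e"
    using root_unique[OF st wV] out[of w] rw b ew by simp
  show "tree_move V T e \<noteq> T" using b rT by auto
qed

lemma exists_tree:
  assumes G: "simple_digraph V E" and sc: "strongly_connected V E" and v: "v \<in> V"
  shows "\<exists>T. is_spanning_tree V E T \<and> tree_root V T = v"
proof -
  define d where "d u = (LEAST n. (u, v) \<in> E ^^ n)" for u
  have dI: "(u, v) \<in> E ^^ d u" if "u \<in> V" for u
  proof -
    have "(u, v) \<in> E\<^sup>*" using sc that v unfolding strongly_connected_def by blast
    then obtain n where "(u, v) \<in> E ^^ n" using rtrancl_power by blast
    then show ?thesis unfolding d_def by (rule LeastI)
  qed
  have step: "\<exists>w. (u, w) \<in> E \<and> d w < d u" if "u \<in> V" "u \<noteq> v" for u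
  proof -
    have "(u, v) \<in> E ^^ d u" using dI that by blast
    moreover have "d u \<noteq> 0" using calculation that by (metis relpow_0_E)
    ultimately obtain k where k: "d u = Suc k" "(u, v) \<in> E ^^ Suc k" by (metis not0_implies_Suc)
    then obtain w where w: "(u, w) \<in> E" "(w, v) \<in> E ^^ k" using relpow_Suc_D2 by metis
    have "d w \<le> k" unfolding d_def using w(2) by (rule Least_le)
    then show ?thesis using w k by auto
  qed
  define nxt where "nxt u = (SOME w. (u, w) \<in> E \<and> d w < d u)" for u
  have nxt: "(u, nxt u) \<in> E \<and> d (nxt u) < d u" if "u \<in> V" "u \<noteq> v" for u
    unfolding nxt_def using someI_ex[OF step[OF that]] .
  define T where "T = {(u, nxt u) | u. u \<in> V \<and> u \<noteq> v}"
  have TE: "T \<subseteq> E" using nxt unfolding T_def by auto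
  have dec: "(x, y) \<in> T\<^sup>+ \<Longrightarrow> d y < d x" for x y
  proof (induction rule: trancl_induct)
    case (base y) then show ?case using nxt unfolding T_def by auto
  next
    case (step y z) then show ?case using nxt unfolding T_def by fastforce
  qed
  have ac: "acyclic T" unfolding acyclic_def using dec by blast
  have outv: "{e\<in>T. fst e = v} = {}" unfolding T_def by auto
  have outu: "{e\<in>T. fst e = u} = {(u, nxt u)}" if "u \<in> V" "u \<noteq> v" for u
    using that unfolding T_def by auto
  have st: "is_spanning_tree V E T"
    unfolding is_spanning_tree_def using TE ac outv outu v by (intro conjI bexI[of _ v]) auto
  show ?thesis using st root_unique[OF st v outv] by blast
qed


theorem lemma4p2:
  fixes V :: "'v set" and E :: "('v \<times> 'v) set"
  assumes "simple_digraph V E"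
    and "strongly_connected V E"
  shows "det_on V (Lmat V E) dvd det_on (spanning_trees V E) (TLmat V E)"
proof -
  note G = assms(1) and sc = assms(2)
  define S where "S = spanning_trees V E"
  define rt where "rt = tree_root V"
  define Lm where "Lm = Lmat V E"
  define TL where "TL = TLmat V E"
  have finV: "finite V" and EV: "E \<subseteq> V \<times> V" and noloop: "\<And>v. (v, v) \<notin> E"
    using G unfolding simple_digraph_def by auto
  have finE: "finite E" using finite_subset[OF EV] finV by auto
  have SI: "a \<in> S \<longleftrightarrow> is_spanning_tree V E a" for a unfolding S_def spanning_trees_def by simp
  have finS: "finite S"
  proof (rule finite_subset[of S "Pow E"])
    show "S \<subseteq> Pow E" using SI unfolding is_spanning_tree_def by auto
  qed (use finE in simp)
  have rtV: "rt a \<in> V" if "a \<in> S" for a using root_props(1)[of V E a] that SI rt_def by simp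
  define \<phi> where "\<phi> v = (SOME T. T \<in> S \<and> rt T = v)" for v
  have \<phi>: "\<phi> v \<in> S \<and> rt (\<phi> v) = v" if "v \<in> V" for v
  proof -
    have "\<exists>T. T \<in> S \<and> rt T = v" using exists_tree[OF G sc that] SI rt_def by auto
    then show ?thesis unfolding \<phi>_def by (rule someI_ex)
  qed
  define T0 where "T0 = \<phi> ` V"
  define S1 where "S1 = S - T0"
  have T0S: "T0 \<subseteq> S" using \<phi> unfolding T0_def by auto
  have T0phi: "\<phi> (rt a) = a" if "a \<in> T0" for a using that \<phi> unfolding T0_def by auto
  have bij: "bij_betw \<phi> V T0"
    unfolding T0_def bij_betw_def by (intro conjI refl inj_on_inverseI[of _ rt]) (use \<phi> in auto)
  have phiT0: "\<phi> v \<in> T0" if "v \<in> V" for v using that unfolding T0_def by auto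
  have mv: "tree_move V c e \<in> S" "rt (tree_move V c e) = snd e" "tree_move V c e \<noteq> c"
    if "c \<in> S" "e \<in> E" "fst e = rt c" for c e
    using move_tree[OF G, of c e] that SI rt_def by auto

  have key: "(\<Sum>a\<in>S. TL c a * (if rt a = v then 1 else 0)) = Lm (rt c) v" if c: "c \<in> S" and v: "v \<in> V" for c v
  proof -
    define r where "r = rt c"
    define D where "D = - (\<Sum>e\<in>{e\<in>E. fst e = r}. Xv e) + Yv r"
    define m where "m e = tree_move V c e" for e
    have TLdec: "TL c a = (if a = c then D else 0) + (\<Sum>e\<in>E. if fst e = r \<and> a = m e then Xv e else 0)"
      if a: "a \<in> S" for a
    proof (cases "a = c")
      case True
      have "(\<Sum>e\<in>E. if fst e = r \<and> a = m e then Xv e else (0::'v gpoly)) = (\<Sum>e\<in>E. 0)"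
        by (intro sum.cong refl) (use mv(3)[OF c] True in \<open>auto simp: m_def r_def\<close>)
      then show ?thesis using True unfolding TL_def TLmat_def D_def r_def rt_def by simp
    next
      case False
      then show ?thesis unfolding TL_def TLmat_def r_def rt_def
        by (simp add: sum.inter_filter[OF finE] m_def)
    qed
    have "(\<Sum>a\<in>S. TL c a * (if rt a = v then 1 else 0)) =
      (\<Sum>a\<in>S. (if a = c then (if rt c = v then D else 0) else 0)) +
      (\<Sum>a\<in>S. \<Sum>e\<in>E. if a = m e then (if fst e = r \<and> rt a = v then Xv e else 0) else 0)"
      unfolding sum.distrib[symmetric]
    proof (intro sum.cong refl)
      fix a assume a: "a \<in> S"
      show "TL c a * (if rt a = v then 1 else 0) = (if a = c then (if rt c = v then D else 0) else 0) +
        (\<Sum>e\<in>E. if a = m e then (if fst e = r \<and> rt a = v then Xv e else 0) else 0)"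
      proof (cases "rt a = v")
        case True
        have "(\<Sum>e\<in>E. if fst e = r \<and> a = m e then Xv e else 0) =
          (\<Sum>e\<in>E. if a = m e then (if fst e = r \<and> rt a = v then Xv e else 0) else (0::'v gpoly))"
          using True by (intro sum.cong refl) auto
        then show ?thesis using True TLdec[OF a] by auto
      next
        case False
        have "(\<Sum>e\<in>E. if a = m e then (if fst e = r \<and> rt a = v then Xv e else 0) else (0::'v gpoly)) = 0"
          using False by (intro sum.neutral) auto
        then show ?thesis using False by auto
      qed
    qed
    also have "(\<Sum>a\<in>S. (if a = c then (if rt c = v then D else 0) else 0)) = (if r = v then D else 0)"
      using c finS by (simp add: sum.delta r_def)
    also have "(\<Sum>a\<in>S. \<Sum>e\<in>E. if a = m e then (if fst e = r \<and> rt a = v then Xv e else 0) else 0)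
        = (\<Sum>e\<in>E. \<Sum>a\<in>S. if a = m e then (if fst e = r \<and> rt a = v then Xv e else 0) else 0)"
      by (rule sum.swap)
    also have "\<dots> = (\<Sum>e\<in>E. if m e \<in> S then (if fst e = r \<and> rt (m e) = v then Xv e else 0) else 0)"
      using finS by (simp add: sum.delta)
    also have "\<dots> = (\<Sum>e\<in>E. if e = (r, v) then Xv e else 0)"
    proof (intro sum.cong refl)
      fix e assume e: "e \<in> E"
      show "(if m e \<in> S then (if fst e = r \<and> rt (m e) = v then Xv e else 0) else 0) = (if e = (r, v) then Xv e else 0)"
      proof (cases "fst e = r")
        case True
        then have "m e \<in> S" "rt (m e) = snd e" using mv[OF c e] unfolding m_def r_def by auto
        then show ?thesis using True by (cases e) auto
      next
        case False then show ?thesis by auto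
      qed
    qed
    also have "\<dots> = (if (r, v) \<in> E then Xv (r, v) else 0)"
      using finE by (simp add: sum.delta)
    finally have eq: "(\<Sum>a\<in>S. TL c a * (if rt a = v then 1 else 0)) = (if r = v then D else 0) + (if (r, v) \<in> E then Xv (r, v) else 0)" .
    show ?thesis
    proof (cases "r = v")
      case True then show ?thesis using eq noloop unfolding Lm_def Lmat_def D_def r_def by simp
    next
      case False then show ?thesis using eq unfolding Lm_def Lmat_def r_def by simp
    qed
  qed

  define U where "U a b = (if b \<in> T0 then (if rt a = rt b then 1 else 0) else (if a = b then 1 else 0) :: 'v gpoly)" for a b
  define B where "B a b = (if b \<in> T0 then (if a \<in> T0 then Lm (rt a) (rt b) else 0)
      else TL a b - (if a \<in> T0 then 0 else TL (\<phi> (rt a)) b))" for a b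

  have C1: "(\<Sum>a\<in>S. TL c a * U a b) = (\<Sum>a\<in>S. U c a * B a b)" if c: "c \<in> S" and b: "b \<in> S" for c b
  proof (cases "b \<in> T0")
    case True
    have "(\<Sum>a\<in>S. TL c a * U a b) = (\<Sum>a\<in>S. TL c a * (if rt a = rt b then 1 else 0))"
      unfolding U_def using True by simp
    also have "\<dots> = Lm (rt c) (rt b)" using key[OF c rtV[OF b]] .
    also have "\<dots> = (\<Sum>a\<in>S. if a = \<phi> (rt c) then Lm (rt c) (rt b) else 0)"
      using \<phi>[OF rtV[OF c]] finS by (simp add: sum.delta)
    also have "\<dots> = (\<Sum>a\<in>S. U c a * B a b)"
    proof (intro sum.cong refl)
      fix a assume a: "a \<in> S"
      show "(if a = \<phi> (rt c) then Lm (rt c) (rt b) else 0) = U c a * B a b"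
      proof (cases "a \<in> T0")
        case True
        have "a = \<phi> (rt c) \<longleftrightarrow> rt c = rt a"
          using T0phi[OF True] \<phi>[OF rtV[OF c]] by metis
        then show ?thesis using True \<open>b \<in> T0\<close> unfolding U_def B_def by auto
      next
        case False
        then have "a \<noteq> \<phi> (rt c)" using phiT0[OF rtV[OF c]] by auto
        then show ?thesis using False \<open>b \<in> T0\<close> unfolding U_def B_def by auto
      qed
    qed
    finally show ?thesis .
  next
    case False
    have "(\<Sum>a\<in>S. TL c a * U a b) = (\<Sum>a\<in>S. if a = b then TL c b else 0)"
      unfolding U_def using False by (intro sum.cong refl) auto
    also have "\<dots> = TL c b" using b finS by (simp add: sum.delta')
    also have "\<dots> = (\<Sum>a\<in>S. (if a = \<phi> (rt c) then TL (\<phi> (rt c)) b else 0)) +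
        (\<Sum>a\<in>S. (if a = c then (if c \<in> T0 then 0 else TL c b - TL (\<phi> (rt c)) b) else 0))"
      using \<phi>[OF rtV[OF c]] c finS T0phi[of c] by (simp add: sum.delta)
    also have "\<dots> = (\<Sum>a\<in>S. U c a * B a b)"
      unfolding sum.distrib[symmetric]
    proof (intro sum.cong refl)
      fix a assume a: "a \<in> S"
      show "(if a = \<phi> (rt c) then TL (\<phi> (rt c)) b else 0) +
          (if a = c then (if c \<in> T0 then 0 else TL c b - TL (\<phi> (rt c)) b) else 0) = U c a * B a b"
      proof (cases "a \<in> T0")
        case True
        have "a = \<phi> (rt c) \<longleftrightarrow> rt c = rt a"
          using T0phi[OF True] \<phi>[OF rtV[OF c]] by metis
        then show ?thesis using True \<open>b \<notin> T0\<close> unfolding U_def B_def by auto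
      next
        case aF: False
        then have "a \<noteq> \<phi> (rt c)" using phiT0[OF rtV[OF c]] by auto
        then show ?thesis using aF \<open>b \<notin> T0\<close> unfolding U_def B_def by auto
      qed
    qed
    finally show ?thesis .
  qed
  have "det_on S TL * det_on S U = det_on S U * det_on S B"
  proof -
    have "det_on S TL * det_on S U = det_on S (\<lambda>c b. \<Sum>a\<in>S. TL c a * U a b)"
      by (rule det_on_mult[OF finS, symmetric])
    also have "\<dots> = det_on S (\<lambda>c b. \<Sum>a\<in>S. U c a * B a b)"
      by (rule det_on_cong) (rule C1)
    also have "\<dots> = det_on S U * det_on S B"
      by (rule det_on_mult[OF finS])
    finally show ?thesis .
  qed
  moreover have "det_on S U = 1"
  proof -
    have S_eq: "S = S1 \<union> T0" using T0S unfolding S1_def by auto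
    have finS1: "finite S1" and finT0: "finite T0" using finS T0S unfolding S1_def by (auto intro: finite_subset)
    have "det_on S U = det_on S1 U * det_on T0 U"
      unfolding S_eq by (rule det_on_block[OF finS1 finT0]) (auto simp: S1_def U_def)
    also have "det_on S1 U = det_on S1 (\<lambda>i j. if i = j then 1 else 0)"
      by (rule det_on_cong) (auto simp: S1_def U_def)
    also have "det_on T0 U = det_on T0 (\<lambda>i j. if i = j then 1 else 0)"
    proof (rule det_on_cong)
      fix i j assume ij: "i \<in> T0" "j \<in> T0"
      have "rt i = rt j \<longleftrightarrow> i = j" using T0phi[OF ij(1)] T0phi[OF ij(2)] by metis
      then show "U i j = (if i = j then 1 else 0)" using ij by (simp add: U_def)
    qed
    moreover have "det_on S1 (\<lambda>i j. if i = j then 1 else 0) = (1::'v gpoly)" by (rule det_on_id[OF finS1])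
    moreover have "det_on T0 (\<lambda>i j. if i = j then 1 else 0) = (1::'v gpoly)" by (rule det_on_id[OF finT0])
    ultimately show ?thesis by simp
  qed
  moreover have "det_on S B = det_on V Lm * det_on S1 B"
  proof -
    have S_eq: "S = T0 \<union> S1" using T0S unfolding S1_def by auto
    have finS1: "finite S1" and finT0: "finite T0" using finS T0S unfolding S1_def by (auto intro: finite_subset)
    have "det_on S B = det_on T0 B * det_on S1 B"
      unfolding S_eq by (rule det_on_block[OF finT0 finS1]) (auto simp: S1_def B_def)
    also have "det_on T0 B = det_on T0 (\<lambda>a b. Lm (rt a) (rt b))"
      by (rule det_on_cong) (auto simp: B_def)
    also have "\<dots> = det_on V (\<lambda>i j. Lm (rt (\<phi> i)) (rt (\<phi> j)))"
      by (rule det_on_reindex[OF bij finV])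
    also have "\<dots> = det_on V Lm"
      by (rule det_on_cong) (use \<phi> in auto)
    finally show ?thesis .
  qed
  ultimately have "det_on S TL = det_on V Lm * det_on S1 B" by simp
  then show ?thesis unfolding S_def TL_def Lm_def by (rule dvdI)
qed

end
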